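(* Let $\mathbf{C}$ be a category of $\mathbf{FI}$ type, let $M_\bullet,N_\bullet$ be free $\mathbf{C}$-modules over $\mathbb{C}$ of respective degrees $\leq c_1$ and $\leq c_2$, and let $X_\bullet\subseteq N_\bullet$ be any $\mathbf{C}$-submodule. Then the canonical extension maps $\Psi_d^e:\mathrm{Hom}_{G_d}(M_d,X_d)\to\mathrm{Hom}_{G_e}(M_e,X_e)$ are injective for all objects $e\geq d\geq c_1+c_2$.
   Context: A category $\mathbf{C}$ is of $\mathbf{FI}$ type if: (1) all Hom-sets are finite; (2) every morphism is a monomorphism and every endomorphism is an isomorphism; (3) for all objects $c,d$ the group $G_d=\mathrm{Aut}_{\mathbf{C}}(d)$ acts transitively on $\mathrm{Hom}_{\mathbf{C}}(c,d)$; (4) for every $d$ only finitely many isomorphism classes of $c$ have $\mathrm{Hom}(c,d)\neq\emptyset$; (5) every pair $c_1\to d\leftarrow c_2$ has a pullback, and every pair $f_i:p\to c_i$ has a weak push-out, i.e. a commutative pullback square $g_i:c_i\to d$ such that for every other pullback square $h_i:c_i\to z$ with $h_1f_1=h_2f_2$ there is a unique $h:d\to z$ with $hg_i=h_i$. Write $c\leq d$ if $\mathrm{Hom}(c,d)\neq\emptyset$. Write $d\geq c_1+c_2$ if $w\leq d$ for every weak push-out object $w$ of any pair of morphisms $p\to c_1$, $p\to c_2$. A $\mathbf{C}$-module is a functor to complex vector spaces. For a finite-dimensional $G_c$-representation $V$, $\mathrm{Ind}_c(V)$ is $d\mapsto\mathbb{C}[\mathrm{Hom}(c,d)]\otimes_{\mathbb{C}[G_c]}V$.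 A free module is a finite direct sum of these, of degree $\leq d$ if each summand $\mathrm{Ind}_c(V)$ ($V\neq0$) has $c\leq d$. For a free module $M$ and any module $X$, the spaces $\mathrm{Hom}_{G_d}(M_d,X_d)$ form a $\mathbf{C}$-module (functorial and left exact in $X$), obtained as the coinvariants $(M^*\otimes X)_d/G_d$ where $M^*=\bigoplus\mathrm{Ind}_{c_i}(V_i^* )$ for $M=\bigoplus\mathrm{Ind}_{c_i}(V_i)$; $\Psi_d^e$ denotes its structure map for $d\leq e$. *)

theory Defs
  imports Complex_Main
begin

record ('o,'m) category =
  Obj  :: "'o set"
  Arr  :: "'m set"
  Dom  :: "'m \<Rightarrow> 'o"
  Cod  :: "'m \<Rightarrow> 'o"
  Comp :: "'m \<Rightarrow> 'm \<Rightarrow> 'm"   (* Comp C g f = g o f *)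
  Idt  :: "'o \<Rightarrow> 'm"

definition Hom :: "('o,'m) category \<Rightarrow> 'o \<Rightarrow> 'o \<Rightarrow> 'm set" where
  "Hom C c d = {f \<in> Arr C. Dom C f = c \<and> Cod C f = d}"

definition Aut :: "('o,'m) category \<Rightarrow> 'o \<Rightarrow> 'm set" where
  "Aut C d = Hom C d d"

definition is_category :: "('o,'m) category \<Rightarrow> bool" where
  "is_category C \<longleftrightarrow>
     (\<forall>f\<in>Arr C. Dom C f \<in> Obj C \<and> Cod C f \<in> Obj C) \<and>
     (\<forall>c\<in>Obj C. Idt C c \<in> Hom C c c) \<and>
     (\<forall>f\<in>Arr C. \<forall>g\<in>Arr C. Cod C f = Dom C g \<longrightarrow>
         Comp C g f \<in> Hom C (Dom C f) (Cod C g)) \<and>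
     (\<forall>f\<in>Arr C. Comp C (Idt C (Cod C f)) f = f \<and> Comp C f (Idt C (Dom C f)) = f) \<and>
     (\<forall>f\<in>Arr C. \<forall>g\<in>Arr C. \<forall>h\<in>Arr C. Cod C f = Dom C g \<longrightarrow> Cod C g = Dom C h \<longrightarrow>
         Comp C h (Comp C g f) = Comp C (Comp C h g) f)"

definition isomorphic :: "('o,'m) category \<Rightarrow> 'o \<Rightarrow> 'o \<Rightarrow> bool" where
  "isomorphic C c c' \<longleftrightarrow> (\<exists>f\<in>Hom C c c'. \<exists>g\<in>Hom C c' c.
      Comp C g f = Idt C c \<and> Comp C f g = Idt C c')"

definition is_pullback :: "('o,'m) category \<Rightarrow> 'm \<Rightarrow> 'm \<Rightarrow> 'o \<Rightarrow> 'm \<Rightarrow> 'm \<Rightarrow> bool" where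
  "is_pullback C f1 f2 p p1 p2 \<longleftrightarrow>
     f1 \<in> Arr C \<and> f2 \<in> Arr C \<and> Cod C f1 = Cod C f2 \<and> p \<in> Obj C \<and>
     p1 \<in> Hom C p (Dom C f1) \<and> p2 \<in> Hom C p (Dom C f2) \<and>
     Comp C f1 p1 = Comp C f2 p2 \<and>
     (\<forall>q q1 q2. q \<in> Obj C \<and> q1 \<in> Hom C q (Dom C f1) \<and> q2 \<in> Hom C q (Dom C f2) \<and>
        Comp C f1 q1 = Comp C f2 q2 \<longrightarrow>
        (\<exists>!u. u \<in> Hom C q p \<and> Comp C p1 u = q1 \<and> Comp C p2 u = q2))"

definition weak_pushout :: "('o,'m) category \<Rightarrow> 'm \<Rightarrow> 'm \<Rightarrow> 'o \<Rightarrow> 'm \<Rightarrow> 'm \<Rightarrow> bool" where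
  "weak_pushout C f1 f2 d g1 g2 \<longleftrightarrow>
     f1 \<in> Arr C \<and> f2 \<in> Arr C \<and> Dom C f1 = Dom C f2 \<and> d \<in> Obj C \<and>
     g1 \<in> Hom C (Cod C f1) d \<and> g2 \<in> Hom C (Cod C f2) d \<and>
     is_pullback C g1 g2 (Dom C f1) f1 f2 \<and>
     (\<forall>z h1 h2. z \<in> Obj C \<and> h1 \<in> Hom C (Cod C f1) z \<and> h2 \<in> Hom C (Cod C f2) z \<and>
        is_pullback C h1 h2 (Dom C f1) f1 f2 \<longrightarrow>
        (\<exists>!h. h \<in> Hom C d z \<and> Comp C h g1 = h1 \<and> Comp C h g2 = h2))"

definition FI_type :: "('o,'m) category \<Rightarrow> bool" where
  "FI_type C \<longleftrightarrow>
     is_category C \<and>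
     \<comment> \<open>(1) finite Hom-sets\<close>
     (\<forall>c\<in>Obj C. \<forall>d\<in>Obj C. finite (Hom C c d)) \<and>
     \<comment> \<open>(2) every morphism is mono, every endomorphism an isomorphism\<close>
     (\<forall>f\<in>Arr C. \<forall>g\<in>Arr C. \<forall>h\<in>Arr C. Cod C g = Dom C f \<and> Cod C h = Dom C f \<and>
         Dom C g = Dom C h \<and> Comp C f g = Comp C f h \<longrightarrow> g = h) \<and>
     (\<forall>d\<in>Obj C. \<forall>f\<in>Hom C d d. \<exists>g\<in>Hom C d d. Comp C g f = Idt C d \<and> Comp C f g = Idt C d) \<and>
     \<comment> \<open>(3) Aut(d) acts transitively on Hom(c,d)\<close>
     (\<forall>c\<in>Obj C. \<forall>d\<in>Obj C. \<forall>f\<in>Hom C c d. \<forall>f'\<in>Hom C c d. \<exists>g\<in>Aut C d. f' = Comp C g f) \<and>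
     \<comment> \<open>(4) finitely many isomorphism classes below each object\<close>
     (\<forall>d\<in>Obj C. \<exists>S. finite S \<and> S \<subseteq> Obj C \<and>
         (\<forall>c\<in>Obj C. Hom C c d \<noteq> {} \<longrightarrow> (\<exists>s\<in>S. isomorphic C c s))) \<and>
     \<comment> \<open>(5) pullbacks and weak push-outs\<close>
     (\<forall>c1 c2 d f1 f2. f1 \<in> Hom C c1 d \<and> f2 \<in> Hom C c2 d \<longrightarrow>
         (\<exists>p p1 p2. is_pullback C f1 f2 p p1 p2)) \<and>
     (\<forall>p c1 c2 f1 f2. f1 \<in> Hom C p c1 \<and> f2 \<in> Hom C p c2 \<longrightarrow>
         (\<exists>d g1 g2. weak_pushout C f1 f2 d g1 g2))"

definition obj_le :: "('o,'m) category \<Rightarrow> 'o \<Rightarrow> 'o \<Rightarrow> bool" where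
  "obj_le C c d \<longleftrightarrow> Hom C c d \<noteq> {}"

definition geq_sum :: "('o,'m) category \<Rightarrow> 'o \<Rightarrow> 'o \<Rightarrow> 'o \<Rightarrow> bool" where
  "geq_sum C d c1 c2 \<longleftrightarrow>
     (\<forall>p f1 f2 w g1 g2. f1 \<in> Hom C p c1 \<and> f2 \<in> Hom C p c2 \<and> weak_pushout C f1 f2 w g1 g2
        \<longrightarrow> obj_le C w d)"

text \<open>The space C^n, realised as functions nat => complex vanishing from n on.\<close>
definition vspace :: "nat \<Rightarrow> (nat \<Rightarrow> complex) set" where
  "vspace n = {v. \<forall>j\<ge>n. v j = 0}"

definition is_rep :: "('o,'m) category \<Rightarrow> 'o \<Rightarrow> nat \<Rightarrow> ('m \<Rightarrow> (nat \<Rightarrow> complex) \<Rightarrow> (nat \<Rightarrow> complex)) \<Rightarrow> bool" where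
  "is_rep C c n \<rho> \<longleftrightarrow>
     (\<forall>g\<in>Aut C c. \<forall>v\<in>vspace n. \<rho> g v \<in> vspace n) \<and>
     (\<forall>g\<in>Aut C c. \<forall>v\<in>vspace n. \<forall>w\<in>vspace n. \<forall>a.
         \<rho> g (\<lambda>j. a * v j + w j) = (\<lambda>j. a * \<rho> g v j + \<rho> g w j)) \<and>
     (\<forall>v\<in>vspace n. \<rho> (Idt C c) v = v) \<and>
     (\<forall>g\<in>Aut C c. \<forall>g'\<in>Aut C c. \<forall>v\<in>vspace n. \<rho> (Comp C g g') v = \<rho> g (\<rho> g' v))"

text \<open>A free module is given by the list of its summands Ind_c(V), each a triple (c, dim V, rho).
  Elements of a free module at an object d have type 'm elt: index of summand => morphism => vector.\<close>
type_synonym 'm elt = "nat \<Rightarrow> 'm \<Rightarrow> nat \<Rightarrow> complex"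
type_synonym ('o,'m) free_spec = "('o \<times> nat \<times> ('m \<Rightarrow> (nat \<Rightarrow> complex) \<Rightarrow> (nat \<Rightarrow> complex))) list"

definition ezero :: "'m elt" where
  "ezero = (\<lambda>i f j. 0)"

definition elin :: "complex \<Rightarrow> 'm elt \<Rightarrow> 'm elt \<Rightarrow> 'm elt" where
  "elin a x y = (\<lambda>i f j. a * x i f j + y i f j)"

definition valid_free :: "('o,'m) category \<Rightarrow> ('o,'m) free_spec \<Rightarrow> bool" where
  "valid_free C L \<longleftrightarrow> (\<forall>(c,n,\<rho>)\<in>set L. c \<in> Obj C \<and> is_rep C c n \<rho>)"

definition free_deg_le :: "('o,'m) category \<Rightarrow> ('o,'m) free_spec \<Rightarrow> 'o \<Rightarrow> bool" where
  "free_deg_le C L c0 \<longleftrightarrow> (\<forall>(c,n,\<rho>)\<in>set L. n > 0 \<longrightarrow> obj_le C c c0)"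

text \<open>The value at d of the free module: Ind_c(V)_d = C[Hom(c,d)] \<otimes>_{C[G_c]} V is realised
  (canonically isomorphically) as the G_c-equivariant functions
  psi : Hom(c,d) -> V with psi(f o g) = rho(g)^{-1} psi(f), i.e. rho(g)(psi(f o g)) = psi(f);
  here f \<otimes> v corresponds to the function supported on f G_c with f o g |-> rho(g^{-1}) v.\<close>
definition fmod :: "('o,'m) category \<Rightarrow> ('o,'m) free_spec \<Rightarrow> 'o \<Rightarrow> 'm elt set" where
  "fmod C L d = {\<psi>. (\<forall>i\<ge>length L. \<forall>f j. \<psi> i f j = 0) \<and>
     (\<forall>i<length L. case L ! i of (c,n,\<rho>) \<Rightarrow>
        (\<forall>f. f \<notin> Hom C c d \<longrightarrow> (\<forall>j. \<psi> i f j = 0)) \<and>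
        (\<forall>f\<in>Hom C c d. \<psi> i f \<in> vspace n) \<and>
        (\<forall>f\<in>Hom C c d. \<forall>g\<in>Aut C c. \<rho> g (\<psi> i (Comp C f g)) = \<psi> i f))}"

text \<open>Structure map M(h) : M_d -> M_e for h : d -> e (induced by f \<otimes> v |-> (h o f) \<otimes> v).\<close>
definition fmap :: "('o,'m) category \<Rightarrow> ('o,'m) free_spec \<Rightarrow> 'm \<Rightarrow> 'm elt \<Rightarrow> 'm elt" where
  "fmap C L h \<psi> = (\<lambda>i k.
     if i < length L \<and> (\<exists>f\<in>Hom C (fst (L ! i)) (Dom C h). k = Comp C h f)
     then \<psi> i (THE f. f \<in> Hom C (fst (L ! i)) (Dom C h) \<and> k = Comp C h f)
     else (\<lambda>j. 0))"

text \<open>The transpose of M^*(h) under the canonical pairing Ind_c(V^*)_d x Ind_c(V)_d -> C: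
  restriction M_e -> M_d along h : d -> e.\<close>
definition fdag :: "('o,'m) category \<Rightarrow> ('o,'m) free_spec \<Rightarrow> 'm \<Rightarrow> 'm elt \<Rightarrow> 'm elt" where
  "fdag C L h \<psi> = (\<lambda>i f.
     if i < length L \<and> f \<in> Hom C (fst (L ! i)) (Dom C h) then \<psi> i (Comp C h f) else (\<lambda>j. 0))"

definition is_submodule :: "('o,'m) category \<Rightarrow> ('o,'m) free_spec \<Rightarrow> ('o \<Rightarrow> 'm elt set) \<Rightarrow> bool" where
  "is_submodule C L X \<longleftrightarrow>
     (\<forall>d\<in>Obj C. X d \<subseteq> fmod C L d \<and> ezero \<in> X d \<and>
        (\<forall>x\<in>X d. \<forall>y\<in>X d. \<forall>a. elin a x y \<in> X d)) \<and>
     (\<forall>c d h. h \<in> Hom C c d \<longrightarrow> fmap C L h ` X c \<subseteq> X d)"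

text \<open>Hom_{G_d}(M_d, X_d): G_d-equivariant linear maps M_d -> X_d (extensional: 0 outside M_d).\<close>
definition HomG :: "('o,'m) category \<Rightarrow> ('o,'m) free_spec \<Rightarrow> ('o,'m) free_spec \<Rightarrow>
    ('o \<Rightarrow> 'm elt set) \<Rightarrow> 'o \<Rightarrow> ('m elt \<Rightarrow> 'm elt) set" where
  "HomG C LM LN X d = {T.
     (\<forall>m. m \<notin> fmod C LM d \<longrightarrow> T m = ezero) \<and>
     (\<forall>m\<in>fmod C LM d. T m \<in> X d) \<and>
     (\<forall>m\<in>fmod C LM d. \<forall>m'\<in>fmod C LM d. \<forall>a. T (elin a m m') = elin a (T m) (T m')) \<and>
     (\<forall>g\<in>Aut C d. \<forall>m\<in>fmod C LM d. T (fmap C LM g m) = fmap C LN g (T m))}"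

text \<open>The structure map Psi_d^e of the C-module (M^* \<otimes> X)_d / G_d, transported to
  Hom_{G_d}(M_d,X_d) = ((M^* \<otimes> X)_d)^{G_d}: T is pushed forward along some h : d -> e
  (giving X(h) o T o h^dagger in M^*_e \<otimes> X_e = Hom(M_e,X_e)), and its coinvariant class is
  identified with an invariant by averaging over G_e.\<close>
definition Psi :: "('o,'m) category \<Rightarrow> ('o,'m) free_spec \<Rightarrow> ('o,'m) free_spec \<Rightarrow>
    'o \<Rightarrow> 'o \<Rightarrow> ('m elt \<Rightarrow> 'm elt) \<Rightarrow> ('m elt \<Rightarrow> 'm elt)" where
  "Psi C LM LN d e T = (\<lambda>m.
     if m \<in> fmod C LM e then
       (let h = (SOME h. h \<in> Hom C d e) in
        (\<lambda>i f j. (1 / of_nat (card (Aut C e))) *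
           (\<Sum>g\<in>Aut C e. fmap C LN (Comp C g h) (T (fdag C LM (Comp C g h) m)) i f j)))
     else ezero)"

end

theory Submission
  imports Defs
begin

lemma hom_obj: "is_category C \<Longrightarrow> f \<in> Hom C a b \<Longrightarrow> a \<in> Obj C \<and> b \<in> Obj C"
  unfolding is_category_def Hom_def by auto

lemma comp_hom: "is_category C \<Longrightarrow> f \<in> Hom C a b \<Longrightarrow> g \<in> Hom C b c \<Longrightarrow> Comp C g f \<in> Hom C a c"
  unfolding is_category_def Hom_def by auto

lemma comp_assoc: "is_category C \<Longrightarrow> f \<in> Hom C a b \<Longrightarrow> g \<in> Hom C b c \<Longrightarrow> k \<in> Hom C c x
   \<Longrightarrow> Comp C k (Comp C g f) = Comp C (Comp C k g) f"
  unfolding is_category_def Hom_def by auto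

lemma id_hom: "is_category C \<Longrightarrow> a \<in> Obj C \<Longrightarrow> Idt C a \<in> Hom C a a"
  unfolding is_category_def by auto

lemma id_left: "is_category C \<Longrightarrow> f \<in> Hom C a b \<Longrightarrow> Comp C (Idt C b) f = f"
  unfolding is_category_def Hom_def by auto

lemma id_right: "is_category C \<Longrightarrow> f \<in> Hom C a b \<Longrightarrow> Comp C f (Idt C a) = f"
  unfolding is_category_def Hom_def by auto

lemma FI_cat: "FI_type C \<Longrightarrow> is_category C" unfolding FI_type_def by auto

lemma FI_mono: "FI_type C \<Longrightarrow> f \<in> Hom C b c \<Longrightarrow> g \<in> Hom C a b \<Longrightarrow> g' \<in> Hom C a b
   \<Longrightarrow> Comp C f g = Comp C f g' \<Longrightarrow> g = g'"
proof -
  assume FI: "FI_type C" and H: "f \<in> Hom C b c" "g \<in> Hom C a b" "g' \<in> Hom C a b" "Comp C f g = Comp C f g'"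
  have M: "\<forall>f\<in>Arr C. \<forall>g\<in>Arr C. \<forall>h\<in>Arr C. Cod C g = Dom C f \<and> Cod C h = Dom C f \<and>
         Dom C g = Dom C h \<and> Comp C f g = Comp C f h \<longrightarrow> g = h" using FI unfolding FI_type_def by (elim conjE) assumption
  show "g = g'" using M H unfolding Hom_def by auto
qed

lemma FI_inv: "FI_type C \<Longrightarrow> g \<in> Hom C a a \<Longrightarrow> \<exists>g'\<in>Hom C a a. Comp C g' g = Idt C a \<and> Comp C g g' = Idt C a"
proof -
  assume FI: "FI_type C" and g: "g \<in> Hom C a a"
  have M: "\<forall>d\<in>Obj C. \<forall>f\<in>Hom C d d. \<exists>g\<in>Hom C d d. Comp C g f = Idt C d \<and> Comp C f g = Idt C d"
    using FI unfolding FI_type_def by (elim conjE) assumption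
  have "a \<in> Obj C" using hom_obj[OF FI_cat[OF FI] g] by simp
  then show ?thesis using M g by blast
qed

lemma FI_trans: "FI_type C \<Longrightarrow> f \<in> Hom C c d \<Longrightarrow> f' \<in> Hom C c d \<Longrightarrow> \<exists>g\<in>Hom C d d. f' = Comp C g f"
proof -
  assume FI: "FI_type C" and f: "f \<in> Hom C c d" and f': "f' \<in> Hom C c d"
  have M: "\<forall>c\<in>Obj C. \<forall>d\<in>Obj C. \<forall>f\<in>Hom C c d. \<forall>f'\<in>Hom C c d. \<exists>g\<in>Aut C d. f' = Comp C g f"
    using FI unfolding FI_type_def by (elim conjE) assumption
  have "c \<in> Obj C" "d \<in> Obj C" using hom_obj[OF FI_cat[OF FI] f] by auto
  then show ?thesis using M f f' unfolding Aut_def by blast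
qed

lemma FI_fin: "FI_type C \<Longrightarrow> a \<in> Obj C \<Longrightarrow> b \<in> Obj C \<Longrightarrow> finite (Hom C a b)"
  unfolding FI_type_def by (elim conjE) blast

lemma FI_pb: "FI_type C \<Longrightarrow> f1 \<in> Hom C c1 d \<Longrightarrow> f2 \<in> Hom C c2 d \<Longrightarrow> \<exists>p p1 p2. is_pullback C f1 f2 p p1 p2"
  unfolding FI_type_def by (elim conjE) metis

lemma FI_po: "FI_type C \<Longrightarrow> f1 \<in> Hom C p c1 \<Longrightarrow> f2 \<in> Hom C p c2 \<Longrightarrow> \<exists>d g1 g2. weak_pushout C f1 f2 d g1 g2"
  unfolding FI_type_def by (elim conjE) metis

lemma pair_lemma:
  assumes FI: "FI_type C" and u: "u \<in> Hom C d e" and h: "h \<in> Hom C d e"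
    and f0: "f0 \<in> Hom C c d" and f1: "f1 \<in> Hom C c d"
    and f': "f' \<in> Hom C c' d" and f'': "f'' \<in> Hom C c' d"
    and e1: "Comp C u f1 = Comp C h f0" and e2: "Comp C u f'' = Comp C h f'"
  shows "\<exists>b\<in>Hom C d d. Comp C b f0 = f1 \<and> Comp C b f' = f''"
proof -
  have cat: "is_category C" using FI by (rule FI_cat)
  obtain p p1 p2 where pb: "is_pullback C f0 f' p p1 p2" using FI_pb[OF FI f0 f'] by blast
  have p1: "p1 \<in> Hom C p c" and p2: "p2 \<in> Hom C p c'" and sq: "Comp C f0 p1 = Comp C f' p2"
    using pb f0 f' unfolding is_pullback_def Hom_def by auto
  have pobj: "p \<in> Obj C" using pb unfolding is_pullback_def by auto
  have sq1: "Comp C f1 p1 = Comp C f'' p2"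
  proof (rule FI_mono[OF FI u])
    show "Comp C f1 p1 \<in> Hom C p d" using comp_hom[OF cat p1 f1] .
    show "Comp C f'' p2 \<in> Hom C p d" using comp_hom[OF cat p2 f''] .
    have "Comp C u (Comp C f1 p1) = Comp C (Comp C u f1) p1" using comp_assoc[OF cat p1 f1 u] .
    also have "\<dots> = Comp C (Comp C h f0) p1" using e1 by simp
    also have "\<dots> = Comp C h (Comp C f0 p1)" using comp_assoc[OF cat p1 f0 h] by simp
    also have "\<dots> = Comp C h (Comp C f' p2)" using sq by simp
    also have "\<dots> = Comp C (Comp C h f') p2" using comp_assoc[OF cat p2 f' h] by simp
    also have "\<dots> = Comp C (Comp C u f'') p2" using e2 by simp
    also have "\<dots> = Comp C u (Comp C f'' p2)" using comp_assoc[OF cat p2 f'' u] by simp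
    finally show "Comp C u (Comp C f1 p1) = Comp C u (Comp C f'' p2)" .
  qed
  have pb1: "is_pullback C f1 f'' p p1 p2"
    unfolding is_pullback_def
  proof (intro conjI allI impI)
    show "f1 \<in> Arr C" "f'' \<in> Arr C" "Cod C f1 = Cod C f''" "p \<in> Obj C"
      "p1 \<in> Hom C p (Dom C f1)" "p2 \<in> Hom C p (Dom C f'')" "Comp C f1 p1 = Comp C f'' p2"
      using f1 f'' p1 p2 pobj sq1 unfolding Hom_def by auto
    fix q q1 q2
    assume H: "q \<in> Obj C \<and> q1 \<in> Hom C q (Dom C f1) \<and> q2 \<in> Hom C q (Dom C f'') \<and> Comp C f1 q1 = Comp C f'' q2"
    hence q1: "q1 \<in> Hom C q c" and q2: "q2 \<in> Hom C q c'" using f1 f'' unfolding Hom_def by auto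
    have "Comp C f0 q1 = Comp C f' q2"
    proof (rule FI_mono[OF FI h])
      show "Comp C f0 q1 \<in> Hom C q d" using comp_hom[OF cat q1 f0] .
      show "Comp C f' q2 \<in> Hom C q d" using comp_hom[OF cat q2 f'] .
      have "Comp C h (Comp C f0 q1) = Comp C (Comp C h f0) q1" using comp_assoc[OF cat q1 f0 h] .
      also have "\<dots> = Comp C (Comp C u f1) q1" using e1 by simp
      also have "\<dots> = Comp C u (Comp C f1 q1)" using comp_assoc[OF cat q1 f1 u] by simp
      also have "\<dots> = Comp C u (Comp C f'' q2)" using H by simp
      also have "\<dots> = Comp C (Comp C u f'') q2" using comp_assoc[OF cat q2 f'' u] by simp
      also have "\<dots> = Comp C (Comp C h f') q2" using e2 by simp
      also have "\<dots> = Comp C h (Comp C f' q2)" using comp_assoc[OF cat q2 f' h] by simp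
      finally show "Comp C h (Comp C f0 q1) = Comp C h (Comp C f' q2)" .
    qed
    moreover have "q1 \<in> Hom C q (Dom C f0)" "q2 \<in> Hom C q (Dom C f')" using q1 q2 f0 f' unfolding Hom_def by auto
    ultimately show "\<exists>!v. v \<in> Hom C q p \<and> Comp C p1 v = q1 \<and> Comp C p2 v = q2"
      using pb H unfolding is_pullback_def by blast
  qed
  obtain w g1 g2 where wp: "weak_pushout C p1 p2 w g1 g2" using FI_po[OF FI p1 p2] by blast
  have dobj: "d \<in> Obj C" using hom_obj[OF cat f0] by simp
  have Dp1: "Dom C p1 = p" and Cp1: "Cod C p1 = c" and Cp2: "Cod C p2 = c'" using p1 p2 unfolding Hom_def by auto
  obtain k0 where k0: "k0 \<in> Hom C w d" "Comp C k0 g1 = f0" "Comp C k0 g2 = f'"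
    using wp pb dobj f0 f' unfolding weak_pushout_def Dp1 Cp1 Cp2 by blast
  obtain k1 where k1: "k1 \<in> Hom C w d" "Comp C k1 g1 = f1" "Comp C k1 g2 = f''"
    using wp pb1 dobj f1 f'' unfolding weak_pushout_def Dp1 Cp1 Cp2 by blast
  have g1: "g1 \<in> Hom C c w" and g2: "g2 \<in> Hom C c' w" using wp unfolding weak_pushout_def Cp1 Cp2 by auto
  obtain b where b: "b \<in> Hom C d d" "k1 = Comp C b k0" using FI_trans[OF FI k0(1) k1(1)] by blast
  show ?thesis
  proof (intro bexI conjI)
    show "Comp C b f0 = f1" using k0 k1 b comp_assoc[OF cat g1 k0(1) b(1)] by simp
    show "Comp C b f' = f''" using k0 k1 b comp_assoc[OF cat g2 k0(1) b(1)] by simp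
  qed (use b in auto)
qed

definition ob :: "('o,'m) free_spec \<Rightarrow> nat \<Rightarrow> 'o" where "ob L i = fst (L ! i)"
definition dm :: "('o,'m) free_spec \<Rightarrow> nat \<Rightarrow> nat" where "dm L i = fst (snd (L ! i))"
definition rp :: "('o,'m) free_spec \<Rightarrow> nat \<Rightarrow> 'm \<Rightarrow> (nat \<Rightarrow> complex) \<Rightarrow> (nat \<Rightarrow> complex)"
  where "rp L i = snd (snd (L ! i))"

lemma zero_vspace: "(\<lambda>j. 0) \<in> vspace n" unfolding vspace_def by simp

lemma rep_zero: assumes "is_rep C c n \<rho>" "g \<in> Aut C c" shows "\<rho> g (\<lambda>j. 0) = (\<lambda>j. 0)"
proof -
  have lin: "\<forall>g\<in>Aut C c. \<forall>v\<in>vspace n. \<forall>w\<in>vspace n. \<forall>a.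
         \<rho> g (\<lambda>j. a * v j + w j) = (\<lambda>j. a * \<rho> g v j + \<rho> g w j)"
    using assms(1) unfolding is_rep_def by (elim conjE) assumption
  have "\<rho> g (\<lambda>j. (-1) * (0::complex) + 0) = (\<lambda>j. (-1) * \<rho> g (\<lambda>j. 0) j + \<rho> g (\<lambda>j. 0) j)"
    using lin[rule_format, OF assms(2) zero_vspace zero_vspace, of "-1"] by simp
  then show ?thesis by simp
qed

lemma rep_vs: assumes "is_rep C c n \<rho>" "g \<in> Aut C c" "v \<in> vspace n" shows "\<rho> g v \<in> vspace n"
  using assms unfolding is_rep_def by blast

lemma rep_lin: assumes "is_rep C c n \<rho>" "g \<in> Aut C c" "v \<in> vspace n" "w \<in> vspace n"
  shows "\<rho> g (\<lambda>j. a * v j + w j) = (\<lambda>j. a * \<rho> g v j + \<rho> g w j)"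
proof -
  have lin: "\<forall>g\<in>Aut C c. \<forall>v\<in>vspace n. \<forall>w\<in>vspace n. \<forall>a.
         \<rho> g (\<lambda>j. a * v j + w j) = (\<lambda>j. a * \<rho> g v j + \<rho> g w j)"
    using assms(1) unfolding is_rep_def by (elim conjE) assumption
  show ?thesis using lin[rule_format, OF assms(2,3,4)] .
qed

lemma vfree: assumes "valid_free C L" "i < length L"
  shows "ob L i \<in> Obj C" "is_rep C (ob L i) (dm L i) (rp L i)"
proof -
  have "L ! i \<in> set L" using assms(2) by simp
  then show "ob L i \<in> Obj C" "is_rep C (ob L i) (dm L i) (rp L i)"
    using assms(1) unfolding valid_free_def ob_def dm_def rp_def by (auto simp: case_prod_beta)
qed

lemma fmod_iff: "\<psi> \<in> fmod C L d \<longleftrightarrow> (\<forall>i\<ge>length L. \<forall>f j. \<psi> i f j = 0) \<and>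
   (\<forall>i<length L. (\<forall>f. f \<notin> Hom C (ob L i) d \<longrightarrow> (\<forall>j. \<psi> i f j = 0)) \<and>
      (\<forall>f\<in>Hom C (ob L i) d. \<psi> i f \<in> vspace (dm L i)) \<and>
      (\<forall>f\<in>Hom C (ob L i) d. \<forall>g\<in>Aut C (ob L i). rp L i g (\<psi> i (Comp C f g)) = \<psi> i f))"
  unfolding fmod_def ob_def dm_def rp_def by (simp add: case_prod_beta)

lemma fmod_out1: "\<psi> \<in> fmod C L d \<Longrightarrow> \<not> i < length L \<Longrightarrow> \<psi> i f = (\<lambda>j. 0)"
  unfolding fmod_iff by auto
lemma fmod_out2: "\<psi> \<in> fmod C L d \<Longrightarrow> f \<notin> Hom C (ob L i) d \<Longrightarrow> \<psi> i f = (\<lambda>j. 0)"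
  unfolding fmod_iff by (cases "i < length L") auto
lemma fmod_vs: "\<psi> \<in> fmod C L d \<Longrightarrow> i < length L \<Longrightarrow> f \<in> Hom C (ob L i) d \<Longrightarrow> \<psi> i f \<in> vspace (dm L i)"
  unfolding fmod_iff by auto
lemma fmod_eq: "\<psi> \<in> fmod C L d \<Longrightarrow> i < length L \<Longrightarrow> f \<in> Hom C (ob L i) d \<Longrightarrow> g \<in> Aut C (ob L i)
   \<Longrightarrow> rp L i g (\<psi> i (Comp C f g)) = \<psi> i f"
  unfolding fmod_iff by auto

lemma fmap_at: assumes FI: "FI_type C" and u: "u \<in> Hom C d e" and f: "f \<in> Hom C (ob L i) d" and i: "i < length L"
  shows "fmap C L u \<psi> i (Comp C u f) = \<psi> i f"
proof -
  have D: "Dom C u = d" using u unfolding Hom_def by simp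
  have T: "(THE x. x \<in> Hom C (fst (L ! i)) (Dom C u) \<and> Comp C u f = Comp C u x) = f"
    apply (rule the_equality)
    using f D unfolding ob_def apply simp
  proof -
    fix x assume "x \<in> Hom C (fst (L ! i)) (Dom C u) \<and> Comp C u f = Comp C u x"
    then show "x = f" using FI_mono[OF FI u, of x "ob L i" f] f D unfolding ob_def by auto
  qed
  show ?thesis unfolding fmap_def using T i f D unfolding ob_def by auto
qed

lemma fmap_off: assumes u: "u \<in> Hom C d e" and n: "\<not> (\<exists>f\<in>Hom C (ob L i) d. k = Comp C u f)"
  shows "fmap C L u \<psi> i k = (\<lambda>j. 0)"
proof -
  have D: "Dom C u = d" using u unfolding Hom_def by simp
  show ?thesis unfolding fmap_def using n D unfolding ob_def by auto
qed

lemma fdag_eq: assumes u: "u \<in> Hom C d e"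
  shows "fdag C L u m i f = (if i < length L \<and> f \<in> Hom C (ob L i) d then m i (Comp C u f) else (\<lambda>j. 0))"
  using u unfolding fdag_def Hom_def ob_def by auto

lemma aut_cancel: assumes FI: "FI_type C" and f: "f \<in> Hom C c x" and g: "g \<in> Aut C c"
  obtains g' where "g' \<in> Aut C c" "Comp C (Comp C f g) g' = f" "Comp C g g' = Idt C c" "Comp C g' g = Idt C c"
proof -
  have cat: "is_category C" using FI_cat[OF FI] .
  obtain g' where g': "g' \<in> Hom C c c" "Comp C g' g = Idt C c" "Comp C g g' = Idt C c"
    using FI_inv[OF FI, of g c] g unfolding Aut_def by blast
  have "Comp C (Comp C f g) g' = Comp C f (Comp C g g')"
    using comp_assoc[OF cat g'(1) _ f, of g] g unfolding Aut_def by simp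
  also have "\<dots> = f" using g'(3) id_right[OF cat f] by simp
  finally show ?thesis using that g' unfolding Aut_def by blast
qed

lemma fmap_fmod: assumes FI: "FI_type C" and vf: "valid_free C L" and u: "u \<in> Hom C d e"
  and psi: "\<psi> \<in> fmod C L d"
  shows "fmap C L u \<psi> \<in> fmod C L e"
  unfolding fmod_iff
proof (intro conjI allI impI ballI)
  have cat: "is_category C" using FI_cat[OF FI] .
  fix i f j assume "length L \<le> i" then show "fmap C L u \<psi> i f j = 0" unfolding fmap_def by simp
next
  have cat: "is_category C" using FI_cat[OF FI] .
  fix i f assume i: "i < length L"
  {
    assume "f \<notin> Hom C (ob L i) e"
    then have "\<not> (\<exists>f1\<in>Hom C (ob L i) d. f = Comp C u f1)" using comp_hom[OF cat _ u] by blast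
    fix j
    from \<open>\<not> (\<exists>f1\<in>Hom C (ob L i) d. f = Comp C u f1)\<close> show "fmap C L u \<psi> i f j = 0" using fmap_off[OF u] by simp
  }
  {
    assume f: "f \<in> Hom C (ob L i) e"
    show "fmap C L u \<psi> i f \<in> vspace (dm L i)"
    proof (cases "\<exists>f1\<in>Hom C (ob L i) d. f = Comp C u f1")
      case True
      then obtain f1 where "f1 \<in> Hom C (ob L i) d" "f = Comp C u f1" by blast
      then show ?thesis using fmap_at[OF FI u _ i] fmod_vs[OF psi i] by simp
    next
      case False then show ?thesis using fmap_off[OF u] zero_vspace by simp
    qed
  }
  {
    fix g assume f: "f \<in> Hom C (ob L i) e" and g: "g \<in> Aut C (ob L i)"
    have rep: "is_rep C (ob L i) (dm L i) (rp L i)" using vfree(2)[OF vf i] .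
    have gh: "g \<in> Hom C (ob L i) (ob L i)" using g unfolding Aut_def .
    show "rp L i g (fmap C L u \<psi> i (Comp C f g)) = fmap C L u \<psi> i f"
    proof (cases "\<exists>f1\<in>Hom C (ob L i) d. f = Comp C u f1")
      case True
      then obtain f1 where f1: "f1 \<in> Hom C (ob L i) d" "f = Comp C u f1" by blast
      have fg: "Comp C f1 g \<in> Hom C (ob L i) d" using comp_hom[OF cat gh f1(1)] .
      have "Comp C f g = Comp C u (Comp C f1 g)" using f1 comp_assoc[OF cat gh f1(1) u] by simp
      then show ?thesis using fmap_at[OF FI u fg i] fmap_at[OF FI u f1(1) i] f1 fmod_eq[OF psi i f1(1) g] by simp
    next
      case False
      have N: "\<not> (\<exists>f2\<in>Hom C (ob L i) d. Comp C f g = Comp C u f2)"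
      proof
        assume "\<exists>f2\<in>Hom C (ob L i) d. Comp C f g = Comp C u f2"
        then obtain f2 where f2: "f2 \<in> Hom C (ob L i) d" "Comp C f g = Comp C u f2" by blast
        obtain g' where g': "g' \<in> Aut C (ob L i)" "Comp C (Comp C f g) g' = f"
          using aut_cancel[OF FI f g] by blast
        have g'h: "g' \<in> Hom C (ob L i) (ob L i)" using g'(1) unfolding Aut_def .
        have "f = Comp C u (Comp C f2 g')" using g' f2 comp_assoc[OF cat g'h f2(1) u] by simp
        moreover have "Comp C f2 g' \<in> Hom C (ob L i) d" using comp_hom[OF cat g'h f2(1)] .
        ultimately show False using False by blast
      qed
      show ?thesis using fmap_off[OF u N] fmap_off[OF u False] rep_zero[OF rep g] by simp
    qed
  }
qed

lemma fmod_elin: assumes FI: "FI_type C" and vf: "valid_free C L" and x: "x \<in> fmod C L d" and y: "y \<in> fmod C L d"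
  shows "elin a x y \<in> fmod C L d"
  unfolding fmod_iff
proof (intro conjI allI impI ballI)
  fix i f j assume "length L \<le> i" then show "elin a x y i f j = 0"
    using fmod_out1[OF x, of i f] fmod_out1[OF y, of i f] unfolding elin_def by (simp add: fun_eq_iff)
next
  fix i f assume i: "i < length L"
  {
    assume nf: "f \<notin> Hom C (ob L i) d"
    fix j
    show "elin a x y i f j = 0"
      using fmod_out2[OF x nf] fmod_out2[OF y nf] unfolding elin_def by (simp add: fun_eq_iff)
  }
  {
    assume f: "f \<in> Hom C (ob L i) d"
    show "elin a x y i f \<in> vspace (dm L i)"
      using fmod_vs[OF x i f] fmod_vs[OF y i f] unfolding elin_def vspace_def by simp
  }
  {
    fix g assume f: "f \<in> Hom C (ob L i) d" and g: "g \<in> Aut C (ob L i)"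
    have rep: "is_rep C (ob L i) (dm L i) (rp L i)" using vfree(2)[OF vf i] .
    have cat_fg: "Comp C f g \<in> Hom C (ob L i) d"
      using comp_hom[OF FI_cat[OF FI] _ f] g unfolding Aut_def by blast
    have "rp L i g (elin a x y i (Comp C f g)) = (\<lambda>j. a * rp L i g (x i (Comp C f g)) j + rp L i g (y i (Comp C f g)) j)"
      using rep_lin[OF rep g fmod_vs[OF x i cat_fg] fmod_vs[OF y i cat_fg]] unfolding elin_def by simp
    also have "\<dots> = elin a x y i f" using fmod_eq[OF x i f g] fmod_eq[OF y i f g] unfolding elin_def by simp
    finally show "rp L i g (elin a x y i (Comp C f g)) = elin a x y i f" .
  }
qed

lemma ezero_fmod: assumes vf: "valid_free C L" shows "ezero \<in> fmod C L d"
  unfolding fmod_iff ezero_def using rep_zero[OF vfree(2)[OF vf]] zero_vspace by auto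

lemma T_zero: assumes vf: "valid_free C L"
  and Tlin: "\<forall>m\<in>fmod C L d. \<forall>m'\<in>fmod C L d. \<forall>a. T (elin a m m') = elin a (T m) (T m')"
  shows "T ezero = ezero"
proof -
  have z: "ezero \<in> fmod C L d" using ezero_fmod[OF vf] .
  have e: "elin 1 ezero ezero = ezero" unfolding elin_def ezero_def by simp
  have "T ezero = elin 1 (T ezero) (T ezero)" using Tlin z e by metis
  then have "\<forall>i f j. T ezero i f j = T ezero i f j + T ezero i f j" unfolding elin_def by (metis mult_1)
  then show ?thesis unfolding ezero_def by (auto simp: fun_eq_iff)
qed

lemma key_term:
  assumes FI: "FI_type C" and vfM: "valid_free C LM" and vfN: "valid_free C LN"
    and h: "h \<in> Hom C d e" and u: "u \<in> Hom C d e"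
    and TM: "\<forall>m\<in>fmod C LM d. T m \<in> fmod C LN d"
    and Tlin: "\<forall>m\<in>fmod C LM d. \<forall>m'\<in>fmod C LM d. \<forall>a. T (elin a m m') = elin a (T m) (T m')"
    and Teq: "\<forall>g\<in>Aut C d. \<forall>m\<in>fmod C LM d. T (fmap C LM g m) = fmap C LN g (T m)"
    and k: "k < length LM" and f0: "f0 \<in> Hom C (ob LM k) d" and m0: "m0 \<in> fmod C LM d"
    and supp: "\<forall>i f. m0 i f \<noteq> (\<lambda>j. 0) \<longrightarrow> i = k \<and> (\<exists>a\<in>Aut C (ob LM k). f = Comp C f0 a)"
    and i: "i < length LN" and f': "f' \<in> Hom C (ob LN i) d"
  shows "fmap C LN u (T (fdag C LM u (fmap C LM h m0))) i (Comp C h f') =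
     (if (\<exists>f1\<in>Hom C (ob LM k) d. Comp C u f1 = Comp C h f0) \<and> (\<exists>f''\<in>Hom C (ob LN i) d. Comp C u f'' = Comp C h f')
      then T m0 i f' else (\<lambda>j. 0))"
proof -
  have cat: "is_category C" using FI_cat[OF FI] .
  define m where "m = fmap C LM h m0"
  show ?thesis
  proof (cases "\<exists>f1\<in>Hom C (ob LM k) d. Comp C u f1 = Comp C h f0")
    case A: True
    then obtain f1 where f1: "f1 \<in> Hom C (ob LM k) d" "Comp C u f1 = Comp C h f0" by blast
    show ?thesis
    proof (cases "\<exists>f''\<in>Hom C (ob LN i) d. Comp C u f'' = Comp C h f'")
      case B: True
      then obtain f'' where f'': "f'' \<in> Hom C (ob LN i) d" "Comp C u f'' = Comp C h f'" by blast
      obtain b where b: "b \<in> Hom C d d" "Comp C b f0 = f1" "Comp C b f' = f''"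
        using pair_lemma[OF FI u h f0 f1(1) f' f''(1) f1(2) f''(2)] by blast
      have bA: "b \<in> Aut C d" using b(1) unfolding Aut_def .
      obtain b' where b': "b' \<in> Hom C d d" "Comp C b b' = Idt C d" "Comp C b' b = Idt C d"
        using FI_inv[OF FI b(1)] by blast
      have bm0: "fmap C LM b m0 \<in> fmod C LM d" using fmap_fmod[OF FI vfM b(1) m0] .
      have D: "fdag C LM u m = fmap C LM b m0"
      proof (rule ext, rule ext)
        fix i' f
        show "fdag C LM u m i' f = fmap C LM b m0 i' f"
        proof (cases "i' < length LM \<and> f \<in> Hom C (ob LM i') d")
          case False
          then show ?thesis using fdag_eq[OF u] fmod_out1[OF bm0] fmod_out2[OF bm0] by auto
        next
          case True
          then have i': "i' < length LM" and f: "f \<in> Hom C (ob LM i') d" by auto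
          define f3 where "f3 = Comp C b' f"
          have f3: "f3 \<in> Hom C (ob LM i') d" unfolding f3_def using comp_hom[OF cat f b'(1)] .
          have bf3: "Comp C b f3 = f" unfolding f3_def
            using comp_assoc[OF cat f b'(1) b(1)] b'(2) id_left[OF cat f] by simp
          have R: "fmap C LM b m0 i' f = m0 i' f3" using fmap_at[OF FI b(1) f3 i'] bf3 by simp
          have L: "fdag C LM u m i' f = m i' (Comp C u f)" using fdag_eq[OF u] True by simp
          show ?thesis
          proof (cases "i' = k \<and> (\<exists>a\<in>Aut C (ob LM k). f3 = Comp C f0 a)")
            case True
            then obtain a where a: "i' = k" "a \<in> Aut C (ob LM k)" "f3 = Comp C f0 a" by blast
            have ah: "a \<in> Hom C (ob LM k) (ob LM k)" using a(2) unfolding Aut_def .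
            have "Comp C u f = Comp C u (Comp C b (Comp C f0 a))" using bf3 a by simp
            also have "\<dots> = Comp C u (Comp C (Comp C b f0) a)" using comp_assoc[OF cat ah f0 b(1)] by simp
            also have "\<dots> = Comp C (Comp C u f1) a" using b(2) comp_assoc[OF cat ah f1(1) u] by simp
            also have "\<dots> = Comp C (Comp C h f0) a" using f1(2) by simp
            also have "\<dots> = Comp C h f3" using a(3) comp_assoc[OF cat ah f0 h] by simp
            finally have "Comp C u f = Comp C h f3" .
            then show ?thesis using L R fmap_at[OF FI h f3 i'] unfolding m_def by simp
          next
            case False
            then have z: "m0 i' f3 = (\<lambda>j. 0)" using supp by blast
            have "m i' (Comp C u f) = (\<lambda>j. 0)"
            proof (cases "\<exists>f2\<in>Hom C (ob LM i') d. Comp C u f = Comp C h f2")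
              case True
              then obtain f2 where f2: "f2 \<in> Hom C (ob LM i') d" "Comp C u f = Comp C h f2" by blast
              have "m0 i' f2 = (\<lambda>j. 0)"
              proof (rule ccontr)
                assume "m0 i' f2 \<noteq> (\<lambda>j. 0)"
                then obtain a where a: "i' = k" "a \<in> Aut C (ob LM k)" "f2 = Comp C f0 a" using supp by blast
                have ah: "a \<in> Hom C (ob LM k) (ob LM k)" using a(2) unfolding Aut_def .
                have "Comp C u f = Comp C h (Comp C f0 a)" using f2 a by simp
                also have "\<dots> = Comp C (Comp C h f0) a" using comp_assoc[OF cat ah f0 h] by simp
                also have "\<dots> = Comp C (Comp C u f1) a" using f1(2) by simp
                also have "\<dots> = Comp C u (Comp C f1 a)" using comp_assoc[OF cat ah f1(1) u] by simp
                finally have "f = Comp C f1 a"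
                  using FI_mono[OF FI u f _] comp_hom[OF cat ah f1(1)] a(1) by auto
                then have "f3 = Comp C (Comp C b' b) (Comp C f0 a)" unfolding f3_def
                  using b(2) comp_assoc[OF cat ah f0 b(1)] comp_assoc[OF cat _ b(1) b'(1), of "Comp C f0 a"]
                    comp_hom[OF cat ah f0] by simp
                also have "\<dots> = Comp C f0 a" using b'(3) id_left[OF cat comp_hom[OF cat ah f0]] by simp
                finally show False using False a by blast
              qed
              then show ?thesis using f2 fmap_at[OF FI h f2(1) i'] unfolding m_def by simp
            next
              case False
              then show ?thesis using fmap_off[OF h] unfolding m_def by metis
            qed
            then show ?thesis using L R z by simp
          qed
        qed
      qed
      have "fmap C LN u (T (fdag C LM u m)) i (Comp C h f') = fmap C LN u (fmap C LN b (T m0)) i (Comp C u f'')"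
        using D Teq bA m0 f''(2) by simp
      also have "\<dots> = fmap C LN b (T m0) i f''" using fmap_at[OF FI u f''(1) i] .
      also have "\<dots> = T m0 i f'" using fmap_at[OF FI b(1) f' i] b(3) by simp
      finally show ?thesis using A B unfolding m_def by simp
    next
      case B: False
      then show ?thesis using fmap_off[OF u] by metis
    qed
  next
    case A: False
    have D: "fdag C LM u m = ezero"
    proof (intro ext)
      fix i' f j
      show "fdag C LM u m i' f j = ezero i' f j"
      proof (cases "i' < length LM \<and> f \<in> Hom C (ob LM i') d")
        case False
        then show ?thesis using fdag_eq[OF u] unfolding ezero_def by auto
      next
        case True
        then have i': "i' < length LM" and f: "f \<in> Hom C (ob LM i') d" by auto
        have L: "fdag C LM u m i' f = m i' (Comp C u f)" using fdag_eq[OF u] True by simp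
        have "m i' (Comp C u f) = (\<lambda>j. 0)"
        proof (cases "\<exists>f2\<in>Hom C (ob LM i') d. Comp C u f = Comp C h f2")
          case True
          then obtain f2 where f2: "f2 \<in> Hom C (ob LM i') d" "Comp C u f = Comp C h f2" by blast
          have "m0 i' f2 = (\<lambda>j. 0)"
          proof (rule ccontr)
            assume "m0 i' f2 \<noteq> (\<lambda>j. 0)"
            then obtain a where a: "i' = k" "a \<in> Aut C (ob LM k)" "f2 = Comp C f0 a" using supp by blast
            obtain a' where a': "a' \<in> Aut C (ob LM k)" "Comp C (Comp C f0 a) a' = f0"
              using aut_cancel[OF FI f0 a(2)] by blast
            have a'h: "a' \<in> Hom C (ob LM k) (ob LM k)" using a'(1) unfolding Aut_def .
            have fk: "f \<in> Hom C (ob LM k) d" using f a(1) by simp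
            have "Comp C u (Comp C f a') = Comp C (Comp C u f) a'" using comp_assoc[OF cat a'h fk u] .
            also have "\<dots> = Comp C (Comp C h f2) a'" using f2 by simp
            also have "\<dots> = Comp C h (Comp C f2 a')" using comp_assoc[OF cat a'h _ h, of f2] f2(1) a(1) by simp
            also have "\<dots> = Comp C h f0" using a(3) a'(2) by simp
            finally show False using A comp_hom[OF cat a'h fk] by blast
          qed
          then show ?thesis using f2 fmap_at[OF FI h f2(1) i'] unfolding m_def by simp
        next
          case False
          then show ?thesis using fmap_off[OF h] unfolding m_def by metis
        qed
        then show ?thesis using L unfolding ezero_def by simp
      qed
    qed
    have "T ezero = ezero" using T_zero[OF vfM Tlin] .
    then have "fmap C LN u (T (fdag C LM u m)) i (Comp C h f') = (\<lambda>j. 0)"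
      using D unfolding fmap_def ezero_def by auto
    then show ?thesis using A unfolding m_def by simp
  qed
qed

lemma psi_val:
  assumes FI: "FI_type C" and vfM: "valid_free C LM" and vfN: "valid_free C LN"
    and h: "h = (SOME h. h \<in> Hom C d e)" and hH: "h \<in> Hom C d e"
    and TM: "\<forall>m\<in>fmod C LM d. T m \<in> fmod C LN d"
    and Tlin: "\<forall>m\<in>fmod C LM d. \<forall>m'\<in>fmod C LM d. \<forall>a. T (elin a m m') = elin a (T m) (T m')"
    and Teq: "\<forall>g\<in>Aut C d. \<forall>m\<in>fmod C LM d. T (fmap C LM g m) = fmap C LN g (T m)"
    and k: "k < length LM" and f0: "f0 \<in> Hom C (ob LM k) d" and m0: "m0 \<in> fmod C LM d"
    and supp: "\<forall>i f. m0 i f \<noteq> (\<lambda>j. 0) \<longrightarrow> i = k \<and> (\<exists>a\<in>Aut C (ob LM k). f = Comp C f0 a)"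
    and i: "i < length LN" and f': "f' \<in> Hom C (ob LN i) d"
  shows "Psi C LM LN d e T (fmap C LM h m0) i (Comp C h f') j =
    (1 / of_nat (card (Aut C e))) * (of_nat (card {g\<in>Aut C e. (\<exists>f1\<in>Hom C (ob LM k) d. Comp C (Comp C g h) f1 = Comp C h f0) \<and> (\<exists>f''\<in>Hom C (ob LN i) d. Comp C (Comp C g h) f'' = Comp C h f')}) * T m0 i f' j)"
proof -
  have cat: "is_category C" using FI_cat[OF FI] .
  have mM: "fmap C LM h m0 \<in> fmod C LM e" using fmap_fmod[OF FI vfM hH m0] .
  have eobj: "e \<in> Obj C" using hom_obj[OF cat hH] by simp
  have fin: "finite (Aut C e)" unfolding Aut_def using FI_fin[OF FI eobj eobj] .
  let ?P = "\<lambda>g. (\<exists>f1\<in>Hom C (ob LM k) d. Comp C (Comp C g h) f1 = Comp C h f0) \<and> (\<exists>f''\<in>Hom C (ob LN i) d. Comp C (Comp C g h) f'' = Comp C h f')"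
  have terms: "\<forall>g\<in>Aut C e. fmap C LN (Comp C g h) (T (fdag C LM (Comp C g h) (fmap C LM h m0))) i (Comp C h f') j
      = (if ?P g then T m0 i f' j else 0)"
  proof
    fix g assume g: "g \<in> Aut C e"
    have u: "Comp C g h \<in> Hom C d e" using comp_hom[OF cat hH] g unfolding Aut_def by blast
    show "fmap C LN (Comp C g h) (T (fdag C LM (Comp C g h) (fmap C LM h m0))) i (Comp C h f') j
      = (if ?P g then T m0 i f' j else 0)"
      using key_term[OF FI vfM vfN hH u TM Tlin Teq k f0 m0 supp i f'] by simp
  qed
  have "Psi C LM LN d e T (fmap C LM h m0) i (Comp C h f') j =
     (1 / of_nat (card (Aut C e))) * (\<Sum>g\<in>Aut C e. fmap C LN (Comp C g h) (T (fdag C LM (Comp C g h) (fmap C LM h m0))) i (Comp C h f') j)"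
    unfolding Psi_def using mM h by (simp add: Let_def)
  also have "\<dots> = (1 / of_nat (card (Aut C e))) * (\<Sum>g\<in>Aut C e. (if ?P g then T m0 i f' j else 0))"
    using terms by simp
  also have "(\<Sum>g\<in>Aut C e. (if ?P g then T m0 i f' j else 0)) = (\<Sum>g\<in>{g\<in>Aut C e. ?P g}. T m0 i f' j)"
    using sum.inter_filter[OF fin, of "\<lambda>_. T m0 i f' j" ?P] by simp
  also have "\<dots> = of_nat (card {g\<in>Aut C e. ?P g}) * T m0 i f' j" by simp
  finally show ?thesis .
qed

lemma orbit_eq:
  assumes FI: "FI_type C" and vfM: "valid_free C LM" and vfN: "valid_free C LN"
    and ne: "Hom C d e \<noteq> {}"
    and TM1: "\<forall>m\<in>fmod C LM d. T1 m \<in> fmod C LN d"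
    and Tlin1: "\<forall>m\<in>fmod C LM d. \<forall>m'\<in>fmod C LM d. \<forall>a. T1 (elin a m m') = elin a (T1 m) (T1 m')"
    and Teq1: "\<forall>g\<in>Aut C d. \<forall>m\<in>fmod C LM d. T1 (fmap C LM g m) = fmap C LN g (T1 m)"
    and TM2: "\<forall>m\<in>fmod C LM d. T2 m \<in> fmod C LN d"
    and Tlin2: "\<forall>m\<in>fmod C LM d. \<forall>m'\<in>fmod C LM d. \<forall>a. T2 (elin a m m') = elin a (T2 m) (T2 m')"
    and Teq2: "\<forall>g\<in>Aut C d. \<forall>m\<in>fmod C LM d. T2 (fmap C LM g m) = fmap C LN g (T2 m)"
    and PsiEq: "Psi C LM LN d e T1 = Psi C LM LN d e T2"
    and k: "k < length LM" and f0: "f0 \<in> Hom C (ob LM k) d" and m0: "m0 \<in> fmod C LM d"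
    and supp: "\<forall>i f. m0 i f \<noteq> (\<lambda>j. 0) \<longrightarrow> i = k \<and> (\<exists>a\<in>Aut C (ob LM k). f = Comp C f0 a)"
  shows "T1 m0 = T2 m0"
proof (rule ext, rule ext, rule ext)
  fix i f' j
  have cat: "is_category C" using FI_cat[OF FI] .
  define h where "h = (SOME h. h \<in> Hom C d e)"
  have hH: "h \<in> Hom C d e" unfolding h_def using ne some_in_eq by blast
  have x1: "T1 m0 \<in> fmod C LN d" and x2: "T2 m0 \<in> fmod C LN d" using TM1 TM2 m0 by auto
  show "T1 m0 i f' j = T2 m0 i f' j"
  proof (cases "i < length LN \<and> f' \<in> Hom C (ob LN i) d")
    case False
    then show ?thesis using fmod_out1[OF x1] fmod_out1[OF x2] fmod_out2[OF x1] fmod_out2[OF x2] by metis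
  next
    case True
    then have i: "i < length LN" and f': "f' \<in> Hom C (ob LN i) d" by auto
    let ?S = "{g\<in>Aut C e. (\<exists>f1\<in>Hom C (ob LM k) d. Comp C (Comp C g h) f1 = Comp C h f0) \<and> (\<exists>f''\<in>Hom C (ob LN i) d. Comp C (Comp C g h) f'' = Comp C h f')}"
    have eobj: "e \<in> Obj C" using hom_obj[OF cat hH] by simp
    have fin: "finite (Aut C e)" unfolding Aut_def using FI_fin[OF FI eobj eobj] .
    have idA: "Idt C e \<in> Aut C e" unfolding Aut_def using id_hom[OF cat eobj] .
    have idS: "Idt C e \<in> ?S" using idA id_left[OF cat hH] f0 f' by auto
    have c1: "card (Aut C e) > 0" using fin idA card_gt_0_iff by blast
    have c2: "card ?S > 0" using fin idS card_gt_0_iff by (metis (no_types, lifting) empty_iff finite_subset mem_Collect_eq subsetI)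
    define N1 where "N1 = card (Aut C e)"
    define N2 where "N2 = card ?S"
    have e1: "Psi C LM LN d e T1 (fmap C LM h m0) i (Comp C h f') j = (1 / of_nat N1) * (of_nat N2 * T1 m0 i f' j)"
      using psi_val[OF FI vfM vfN h_def hH TM1 Tlin1 Teq1 k f0 m0 supp i f', of j] unfolding N1_def N2_def .
    have e2: "Psi C LM LN d e T2 (fmap C LM h m0) i (Comp C h f') j = (1 / of_nat N1) * (of_nat N2 * T2 m0 i f' j)"
      using psi_val[OF FI vfM vfN h_def hH TM2 Tlin2 Teq2 k f0 m0 supp i f', of j] unfolding N1_def N2_def .
    have "(1 / of_nat N1) * (of_nat N2 * T1 m0 i f' j) = (1 / of_nat N1) * (of_nat N2 * (T2 m0 i f' j :: complex))"
      by (metis e1 e2 PsiEq)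
    moreover have "N1 > 0" "N2 > 0" using c1 c2 unfolding N1_def N2_def by auto
    ultimately show ?thesis by simp
  qed
qed

definition R :: "('o,'m) category \<Rightarrow> ('o,'m) free_spec \<Rightarrow> (nat \<times> 'm) set \<Rightarrow> 'm elt \<Rightarrow> 'm elt" where
  "R C L A y = (\<lambda>i f. if (\<exists>(k,f0)\<in>A. i = k \<and> (\<exists>a\<in>Aut C (ob L k). f = Comp C f0 a)) then y i f else (\<lambda>j. 0))"

lemma orbit_cond: assumes FI: "FI_type C" and f0: "f0 \<in> Hom C c d" and f: "f \<in> Hom C c d" and g: "g \<in> Aut C c"
  shows "(\<exists>a\<in>Aut C c. Comp C f g = Comp C f0 a) \<longleftrightarrow> (\<exists>a\<in>Aut C c. f = Comp C f0 a)"
proof -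
  have cat: "is_category C" using FI_cat[OF FI] .
  have gh: "g \<in> Hom C c c" using g unfolding Aut_def .
  obtain g' where g': "g' \<in> Aut C c" "Comp C (Comp C f g) g' = f" using aut_cancel[OF FI f g] by blast
  have g'h: "g' \<in> Hom C c c" using g'(1) unfolding Aut_def .
  show ?thesis
  proof
    assume "\<exists>a\<in>Aut C c. Comp C f g = Comp C f0 a"
    then obtain a where a: "a \<in> Aut C c" "Comp C f g = Comp C f0 a" by blast
    have ah: "a \<in> Hom C c c" using a(1) unfolding Aut_def .
    have "f = Comp C (Comp C f0 a) g'" using g' a by simp
    also have "\<dots> = Comp C f0 (Comp C a g')" using comp_assoc[OF cat g'h ah f0] by simp
    finally show "\<exists>a\<in>Aut C c. f = Comp C f0 a" using comp_hom[OF cat g'h ah] unfolding Aut_def by blast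
  next
    assume "\<exists>a\<in>Aut C c. f = Comp C f0 a"
    then obtain a where a: "a \<in> Aut C c" "f = Comp C f0 a" by blast
    have ah: "a \<in> Hom C c c" using a(1) unfolding Aut_def .
    have "Comp C f g = Comp C f0 (Comp C a g)" using a comp_assoc[OF cat gh ah f0] by simp
    then show "\<exists>a\<in>Aut C c. Comp C f g = Comp C f0 a" using comp_hom[OF cat gh ah] unfolding Aut_def by blast
  qed
qed

lemma R_single: "R C L {(k,f0)} y i f = (if i = k \<and> (\<exists>a\<in>Aut C (ob L k). f = Comp C f0 a) then y i f else (\<lambda>j. 0))"
  unfolding R_def by simp

lemma R_fmod: assumes FI: "FI_type C" and vf: "valid_free C L" and y: "y \<in> fmod C L d"
  and f0: "f0 \<in> Hom C (ob L k) d"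
  shows "R C L {(k,f0)} y \<in> fmod C L d"
  unfolding fmod_iff
proof (intro conjI allI impI ballI)
  fix i f j assume "length L \<le> i" then show "R C L {(k,f0)} y i f j = 0"
    using fmod_out1[OF y, of i f] unfolding R_single by auto
next
  fix i f assume i: "i < length L"
  {
    assume nf: "f \<notin> Hom C (ob L i) d"
    fix j show "R C L {(k,f0)} y i f j = 0" using fmod_out2[OF y nf] unfolding R_single by auto
  }
  {
    assume f: "f \<in> Hom C (ob L i) d"
    show "R C L {(k,f0)} y i f \<in> vspace (dm L i)" using fmod_vs[OF y i f] zero_vspace unfolding R_single by auto
  }
  {
    fix g assume f: "f \<in> Hom C (ob L i) d" and g: "g \<in> Aut C (ob L i)"
    have rep: "is_rep C (ob L i) (dm L i) (rp L i)" using vfree(2)[OF vf i] .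
    show "rp L i g (R C L {(k,f0)} y i (Comp C f g)) = R C L {(k,f0)} y i f"
    proof (cases "i = k")
      case True
      then have oc: "(\<exists>a\<in>Aut C (ob L k). Comp C f g = Comp C f0 a) \<longleftrightarrow> (\<exists>a\<in>Aut C (ob L k). f = Comp C f0 a)"
        using orbit_cond[OF FI f0, of f g] f g by simp
      show ?thesis using oc True fmod_eq[OF y i f g] rep_zero[OF rep g] unfolding R_single by auto
    next
      case False
      then show ?thesis using rep_zero[OF rep g] unfolding R_single by simp
    qed
  }
qed

lemma R_insert: "R C L (insert (k,f0) A) y = elin 1 (R C L {(k,f0)} (elin (-1) (R C L A y) y)) (R C L A y)"
  unfolding R_def elin_def by (auto simp: fun_eq_iff)

lemma R_empty: "R C L {} y = ezero" unfolding R_def ezero_def by auto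

lemma R_full: assumes FI: "FI_type C" and y: "y \<in> fmod C L d"
  shows "R C L (Sigma {..<length L} (\<lambda>k. Hom C (ob L k) d)) y = y"
proof (rule ext, rule ext)
  fix i f
  show "R C L (Sigma {..<length L} (\<lambda>k. Hom C (ob L k) d)) y i f = y i f"
  proof (cases "i < length L \<and> f \<in> Hom C (ob L i) d")
    case True
    then have "Idt C (ob L i) \<in> Aut C (ob L i)" "f = Comp C f (Idt C (ob L i))"
      using id_hom[OF FI_cat[OF FI]] hom_obj[OF FI_cat[OF FI]] id_right[OF FI_cat[OF FI]] unfolding Aut_def by auto
    then show ?thesis using True unfolding R_def by auto
  next
    case False
    then show ?thesis using fmod_out1[OF y] fmod_out2[OF y] unfolding R_def by auto
  qed
qed

lemma decomp_eq:
  assumes FI: "FI_type C" and vfM: "valid_free C LM" and vfN: "valid_free C LN"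
    and ne: "Hom C d e \<noteq> {}"
    and TM1: "\<forall>m\<in>fmod C LM d. T1 m \<in> fmod C LN d"
    and Tlin1: "\<forall>m\<in>fmod C LM d. \<forall>m'\<in>fmod C LM d. \<forall>a. T1 (elin a m m') = elin a (T1 m) (T1 m')"
    and Teq1: "\<forall>g\<in>Aut C d. \<forall>m\<in>fmod C LM d. T1 (fmap C LM g m) = fmap C LN g (T1 m)"
    and TM2: "\<forall>m\<in>fmod C LM d. T2 m \<in> fmod C LN d"
    and Tlin2: "\<forall>m\<in>fmod C LM d. \<forall>m'\<in>fmod C LM d. \<forall>a. T2 (elin a m m') = elin a (T2 m) (T2 m')"
    and Teq2: "\<forall>g\<in>Aut C d. \<forall>m\<in>fmod C LM d. T2 (fmap C LM g m) = fmap C LN g (T2 m)"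
    and PsiEq: "Psi C LM LN d e T1 = Psi C LM LN d e T2"
    and m0: "m0 \<in> fmod C LM d"
  shows "T1 m0 = T2 m0"
proof -
  define S where "S = Sigma {..<length LM} (\<lambda>k. Hom C (ob LM k) d)"
  have cat: "is_category C" using FI_cat[OF FI] .
  have dobj: "d \<in> Obj C" using ne hom_obj[OF cat] by blast
  have finS: "finite S" unfolding S_def
    using FI_fin[OF FI vfree(1)[OF vfM] dobj] by (intro finite_SigmaI) auto
  have inv: "A \<subseteq> S \<Longrightarrow> R C LM A m0 \<in> fmod C LM d \<and> T1 (R C LM A m0) = T2 (R C LM A m0)" for A
    using finite_subset[OF _ finS, of A]
  proof (induction A rule: infinite_finite_induct)
    case (infinite A) then show ?case by blast
  next
    case empty
    then show ?case using R_empty ezero_fmod[OF vfM] T_zero[OF vfM Tlin1] T_zero[OF vfM Tlin2] by metis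
  next
    case (insert x A)
    obtain k f0 where x: "x = (k,f0)" by (cases x)
    have kf: "k < length LM" "f0 \<in> Hom C (ob LM k) d" using insert.prems x unfolding S_def by auto
    have IH: "R C LM A m0 \<in> fmod C LM d" "T1 (R C LM A m0) = T2 (R C LM A m0)" using insert by auto
    define m' where "m' = elin (-1) (R C LM A m0) m0"
    have m': "m' \<in> fmod C LM d" unfolding m'_def using fmod_elin[OF FI vfM IH(1) m0] .
    define p where "p = R C LM {(k,f0)} m'"
    have p: "p \<in> fmod C LM d" unfolding p_def using R_fmod[OF FI vfM m' kf(2)] .
    have supp: "\<forall>i f. p i f \<noteq> (\<lambda>j. 0) \<longrightarrow> i = k \<and> (\<exists>a\<in>Aut C (ob LM k). f = Comp C f0 a)"
      unfolding p_def R_single by auto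
    have pe: "T1 p = T2 p" using orbit_eq[OF FI vfM vfN ne TM1 Tlin1 Teq1 TM2 Tlin2 Teq2 PsiEq kf p supp] .
    have RI: "R C LM (insert x A) m0 = elin 1 p (R C LM A m0)" unfolding x p_def m'_def by (rule R_insert)
    show ?case using RI fmod_elin[OF FI vfM p IH(1)] Tlin1 Tlin2 p IH pe by simp
  qed
  have "T1 (R C LM S m0) = T2 (R C LM S m0)" using inv by blast
  then show ?thesis using R_full[OF FI m0] unfolding S_def by simp
qed

theorem mainTheorem16:
  fixes C :: "('o,'m) category"
    and LM LN :: "('o,'m) free_spec"
    and X :: "'o \<Rightarrow> 'm elt set"
    and c1 c2 d e :: 'o
  assumes "FI_type C"
    and "c1 \<in> Obj C" and "c2 \<in> Obj C"
    and "valid_free C LM" and "free_deg_le C LM c1"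
    and "valid_free C LN" and "free_deg_le C LN c2"
    and "is_submodule C LN X"
    and "d \<in> Obj C" and "e \<in> Obj C"
    and "obj_le C d e" and "geq_sum C d c1 c2"
  shows "inj_on (Psi C LM LN d e) (HomG C LM LN X d)"
proof (rule inj_onI)
  fix T1 T2 assume T1: "T1 \<in> HomG C LM LN X d" and T2: "T2 \<in> HomG C LM LN X d"
    and PsiEq: "Psi C LM LN d e T1 = Psi C LM LN d e T2"
  have Xs: "X d \<subseteq> fmod C LN d" using assms(8,9) unfolding is_submodule_def by blast
  have ne: "Hom C d e \<noteq> {}" using assms(11) unfolding obj_le_def .
  show "T1 = T2"
  proof (rule ext)
    fix m
    show "T1 m = T2 m"
    proof (cases "m \<in> fmod C LM d")
      case False then show ?thesis using T1 T2 unfolding HomG_def by simp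
    next
      case True
      show ?thesis
      proof (rule decomp_eq[OF assms(1,4,6) ne _ _ _ _ _ _ PsiEq True])
        show "\<forall>m\<in>fmod C LM d. T1 m \<in> fmod C LN d" using T1 Xs unfolding HomG_def by blast
        show "\<forall>m\<in>fmod C LM d. T2 m \<in> fmod C LN d" using T2 Xs unfolding HomG_def by blast
        show "\<forall>m\<in>fmod C LM d. \<forall>m'\<in>fmod C LM d. \<forall>a. T1 (elin a m m') = elin a (T1 m) (T1 m')"
          using T1 unfolding HomG_def by blast
        show "\<forall>m\<in>fmod C LM d. \<forall>m'\<in>fmod C LM d. \<forall>a. T2 (elin a m m') = elin a (T2 m) (T2 m')"
          using T2 unfolding HomG_def by blast
        show "\<forall>g\<in>Aut C d. \<forall>m\<in>fmod C LM d. T1 (fmap C LM g m) = fmap C LN g (T1 m)"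
          using T1 unfolding HomG_def by blast
        show "\<forall>g\<in>Aut C d. \<forall>m\<in>fmod C LM d. T2 (fmap C LM g m) = fmap C LN g (T2 m)"
          using T2 unfolding HomG_def by blast
      qed
    qed
  qed
qed

end
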